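(* Let $\epsilon > 0$ and $\delta \in (0,1)$, and set $d = \lceil \ln(1/\delta) \rceil$ and $w = 1 + \lceil e/\epsilon \rceil$. Consider a stream of $N$ records. Each record $r$ has a primary key (record id) $r_0$ and values $r_1,\dots,r_p$ on $p$ searchable attributes $a_1,\dots,a_p$; $\mathcal{D}(a_i)$ denotes the domain of $a_i$. Choose $d \cdot p$ hash functions $h_i^j : \mathcal{D}(a_i) \to \{1,\dots,w\}$, for $i \in \{1,\dots,p\}$ and $j \in \{1,\dots,d\}$, uniformly at random from a pairwise-independent family. Build $p$ arrays $CM_1,\dots,CM_p$, each of size $w \times d$, every cell of which initially holds an empty set of record ids. Each record $r$ is inserted by adding $r_0$ to the cell $CM_i[j, h_i^j(r_i)]$ for every $i \in \{1,\dots,p\}$ and every $j \in \{1,\dots,d\}$. A query $q = (q_1,\dots,q_p)$ consists of one equality predicate $a_i = q_i$ on each of the $p$ attributes. Let $f(q)$ be the number of records $r$ in the stream with $r_i = q_i$ for all $i$. Define the estimate $$\hat f(q) = \min_{j=1,\dots,d} \left| \bigcap_{i=1}^{p} CM_i[j, h_i^j(q_i)] \right|.$$ Then $$\Pr\big(|\hat f(q) - f(q)| \le \epsilon N\big) \ge 1 - \delta.$$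
   Context: This describes a sketch that extends the Count-min sketch by storing record ids in each cell. The probability is taken over the random choice of the hash functions. Record ids are distinct across records. *)

theory Defs
  imports "HOL-Probability.Probability"
begin

text \<open>A record is a pair (record id r0, attribute values i |-> r_i); attributes are indexed 1..p.
  All attribute domains live in one ambient type 'a; D i is the domain of attribute a_i.\<close>
type_synonym ('b, 'a) srecord = "'b \<times> (nat \<Rightarrow> 'a)"

definition pairwise_indep_family :: "('a \<Rightarrow> nat) set \<Rightarrow> 'a set \<Rightarrow> nat \<Rightarrow> bool" where
  "pairwise_indep_family H D w \<longleftrightarrow>
     finite H \<and> H \<noteq> {} \<and>
     (\<forall>h\<in>H. \<forall>x\<in>D. h x \<in> {1..w}) \<and>
     (\<forall>x\<in>D. \<forall>y\<in>D. x \<noteq> y \<longrightarrow> (\<forall>a\<in>{1..w}. \<forall>b\<in>{1..w}.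
        real (card {h\<in>H. h x = a \<and> h y = b}) / real (card H) = 1 / (real w)^2))"

text \<open>Sketch: CM i j c is the cell in row j, column c of array CM_i (sets of record ids).
  hs (i,j) is the hash function h_i^j.\<close>
definition empty_sketch :: "nat \<Rightarrow> nat \<Rightarrow> nat \<Rightarrow> 'b set" where
  "empty_sketch = (\<lambda>i j c. {})"

definition insert_record ::
  "nat \<Rightarrow> nat \<Rightarrow> (nat \<times> nat \<Rightarrow> 'a \<Rightarrow> nat) \<Rightarrow> ('b, 'a) srecord
     \<Rightarrow> (nat \<Rightarrow> nat \<Rightarrow> nat \<Rightarrow> 'b set) \<Rightarrow> (nat \<Rightarrow> nat \<Rightarrow> nat \<Rightarrow> 'b set)" where
  "insert_record p d hs r CM = (\<lambda>i j c.
     if i \<in> {1..p} \<and> j \<in> {1..d} \<and> c = hs (i, j) (snd r i)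
     then insert (fst r) (CM i j c) else CM i j c)"

definition build_sketch ::
  "nat \<Rightarrow> nat \<Rightarrow> (nat \<times> nat \<Rightarrow> 'a \<Rightarrow> nat) \<Rightarrow> ('b, 'a) srecord list
     \<Rightarrow> (nat \<Rightarrow> nat \<Rightarrow> nat \<Rightarrow> 'b set)" where
  "build_sketch p d hs rs = fold (insert_record p d hs) rs empty_sketch"

definition estimate ::
  "nat \<Rightarrow> nat \<Rightarrow> (nat \<times> nat \<Rightarrow> 'a \<Rightarrow> nat) \<Rightarrow> ('b, 'a) srecord list \<Rightarrow> (nat \<Rightarrow> 'a) \<Rightarrow> nat" where
  "estimate p d hs rs q =
     (let CM = build_sketch p d hs rs in
      Min ((\<lambda>j. card (\<Inter>i\<in>{1..p}. CM i j (hs (i, j) (q i)))) ` {1..d}))"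

definition true_freq :: "nat \<Rightarrow> ('b, 'a) srecord list \<Rightarrow> (nat \<Rightarrow> 'a) \<Rightarrow> nat" where
  "true_freq p rs q = length (filter (\<lambda>r. \<forall>i\<in>{1..p}. snd r i = q i) rs)"

definition sketch_depth :: "real \<Rightarrow> nat" where
  "sketch_depth \<delta> = nat \<lceil>ln (1 / \<delta>)\<rceil>"

definition sketch_width :: "real \<Rightarrow> nat" where
  "sketch_width \<epsilon> = 1 + nat \<lceil>exp 1 / \<epsilon>\<rceil>"

definition hash_choice :: "nat \<Rightarrow> nat \<Rightarrow> (nat \<Rightarrow> ('a \<Rightarrow> nat) set) \<Rightarrow> (nat \<times> nat \<Rightarrow> 'a \<Rightarrow> nat) pmf" where
  "hash_choice p d H = pmf_of_set (PiE ({1..p} \<times> {1..d}) (\<lambda>(i, j). H i))"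

end

theory Submission
  imports Defs
begin

lemma fold_sketch:
  "fold (insert_record p d hs) rs CM i j c =
     (if i \<in> {1..p} \<and> j \<in> {1..d} then CM i j c \<union> fst ` {r \<in> set rs. hs (i,j) (snd r i) = c} else CM i j c)"
proof (induction rs arbitrary: CM)
  case Nil then show ?case by simp
next
  case (Cons r rs)
  show ?case using Cons[of "insert_record p d hs r CM"]
    by (auto simp: insert_record_def)
qed

lemma build_sketch_eq:
  "i \<in> {1..p} \<Longrightarrow> j \<in> {1..d} \<Longrightarrow>
   build_sketch p d hs rs i j c = fst ` {r \<in> set rs. hs (i,j) (snd r i) = c}"
  by (simp add: build_sketch_def fold_sketch empty_sketch_def)

lemma card_coll:
  assumes "distinct (map fst rs)" "p \<ge> 1" "j \<in> {1..d}"
  shows "card (\<Inter>i\<in>{1..p}. build_sketch p d hs rs i j (hs (i, j) (q i)))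
     = card {r \<in> set rs. \<forall>i\<in>{1..p}. hs (i,j) (snd r i) = hs (i,j) (q i)}"
proof -
  have inj: "inj_on fst (set rs)" using assms(1) by (simp add: distinct_map)
  have "(\<Inter>i\<in>{1..p}. build_sketch p d hs rs i j (hs (i, j) (q i)))
      = fst ` {r \<in> set rs. \<forall>i\<in>{1..p}. hs (i,j) (snd r i) = hs (i,j) (q i)}"
  proof
    show "fst ` {r \<in> set rs. \<forall>i\<in>{1..p}. hs (i,j) (snd r i) = hs (i,j) (q i)} \<subseteq> (\<Inter>i\<in>{1..p}. build_sketch p d hs rs i j (hs (i, j) (q i)))"
      using assms by (auto simp: build_sketch_eq)
  next
    show "(\<Inter>i\<in>{1..p}. build_sketch p d hs rs i j (hs (i, j) (q i))) \<subseteq> fst ` {r \<in> set rs. \<forall>i\<in>{1..p}. hs (i,j) (snd r i) = hs (i,j) (q i)}"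
    proof
      fix x assume x: "x \<in> (\<Inter>i\<in>{1..p}. build_sketch p d hs rs i j (hs (i, j) (q i)))"
      have "x \<in> build_sketch p d hs rs 1 j (hs (1, j) (q 1))" using x assms by auto
      then obtain r where r: "r \<in> set rs" "x = fst r" using assms by (auto simp: build_sketch_eq)
      have "hs (i,j) (snd r i) = hs (i,j) (q i)" if ip: "i \<in> {1..p}" for i
      proof -
        have "x \<in> build_sketch p d hs rs i j (hs (i, j) (q i))" using x that by auto
        then have "x \<in> fst ` {r \<in> set rs. hs (i,j) (snd r i) = hs (i,j) (q i)}"
          unfolding build_sketch_eq[OF ip assms(3)] .
        then obtain r' where "r' \<in> set rs" "x = fst r'" "hs (i,j) (snd r' i) = hs (i,j) (q i)"
          by auto
        with r inj have "r' = r" by (metis inj_onD)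
        with \<open>hs (i,j) (snd r' i) = hs (i,j) (q i)\<close> show ?thesis by simp
      qed
      then show "x \<in> fst ` {r \<in> set rs. \<forall>i\<in>{1..p}. hs (i,j) (snd r i) = hs (i,j) (q i)}"
        using r by auto
    qed
  qed
  moreover have "inj_on fst {r \<in> set rs. \<forall>i\<in>{1..p}. hs (i,j) (snd r i) = hs (i,j) (q i)}"
    using inj by (rule inj_on_subset) auto
  ultimately show ?thesis by (simp add: card_image)
qed


lemma card_rows:
  assumes "finite I" "finite J" "\<forall>i\<in>I. finite (H i)"
  shows "card {hs \<in> PiE (I\<times>J) (\<lambda>(i,j). H i). \<forall>j\<in>J. P (\<lambda>i. hs (i,j))}
        = card {t \<in> PiE I H. P t} ^ card J"
proof -
  let ?A = "{hs \<in> PiE (I\<times>J) (\<lambda>(i,j). H i). \<forall>j\<in>J. P (\<lambda>i. hs (i,j))}"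
  let ?B = "PiE J (\<lambda>_. {t \<in> PiE I H. P t})"
  let ?f = "\<lambda>hs. (\<lambda>j\<in>J. (\<lambda>i. hs (i,j)))"
  let ?g = "\<lambda>G. (\<lambda>(i,j)\<in>I\<times>J. G j i)"
  have row: "(\<lambda>i. hs (i,j)) = (\<lambda>i\<in>I. hs (i,j))" if "hs \<in> PiE (I\<times>J) (\<lambda>(i,j). H i)" "j \<in> J" for hs j
    using that by (auto simp: PiE_def extensional_def)
  have "bij_betw ?f ?A ?B"
  proof (rule bij_betw_byWitness[where f'="?g"])
    show "\<forall>a\<in>?A. ?g (?f a) = a"
      by (auto simp: PiE_def extensional_def fun_eq_iff)
    show "\<forall>a'\<in>?B. ?f (?g a') = a'"
      by (auto simp: PiE_def extensional_def fun_eq_iff Pi_def)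
    show "?f ` ?A \<subseteq> ?B"
    proof
      fix G assume "G \<in> ?f ` ?A"
      then obtain hs where hs: "hs \<in> ?A" "G = ?f hs" by blast
      show "G \<in> ?B"
      proof (rule PiE_I)
        fix j assume j: "j \<in> J"
        have "(\<lambda>i. hs (i,j)) \<in> PiE I H" using hs j by (auto simp: PiE_def extensional_def)
        then show "G j \<in> {t \<in> PiE I H. P t}" using hs j by auto
      next
        fix j assume "j \<notin> J" then show "G j = undefined" using hs by auto
      qed
    qed
    show "?g ` ?B \<subseteq> ?A"
    proof
      fix hs assume "hs \<in> ?g ` ?B"
      then obtain G where G: "G \<in> ?B" "hs = ?g G" by blast
      have "(\<lambda>i. hs (i,j)) = G j" if "j \<in> J" for j
        using G that by (auto simp: PiE_def extensional_def fun_eq_iff Pi_def)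
      moreover have "hs \<in> PiE (I\<times>J) (\<lambda>(i,j). H i)" using G by (auto simp: PiE_def extensional_def)
      ultimately show "hs \<in> ?A" using G by auto
    qed
  qed
  then have "card ?A = card ?B" by (rule bij_betw_same_card)
  also have "\<dots> = card {t \<in> PiE I H. P t} ^ card J" using assms by (simp add: card_PiE)
  finally show ?thesis .
qed

lemma pair_coll:
  assumes "pairwise_indep_family Hs D w" "x \<in> D" "y \<in> D" "x \<noteq> y"
  shows "real (card {h\<in>Hs. h x = h y}) * real w = real (card Hs)"
proof -
  from assms(1) have fin: "finite Hs" and ne: "Hs \<noteq> {}" and rng: "\<forall>h\<in>Hs. h x \<in> {1..w}"
    and pi: "\<forall>a\<in>{1..w}. \<forall>b\<in>{1..w}. real (card {h\<in>Hs. h x = a \<and> h y = b}) / real (card Hs) = 1 / (real w)^2"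
    using assms unfolding pairwise_indep_family_def by auto
  have cH: "card Hs > 0" using fin ne by (simp add: card_gt_0_iff)
  have w1: "w \<ge> 1" using ne rng by fastforce
  have eq: "{h\<in>Hs. h x = h y} = (\<Union>a\<in>{1..w}. {h\<in>Hs. h x = a \<and> h y = a})" using rng by auto
  have "card {h\<in>Hs. h x = h y} = (\<Sum>a\<in>{1..w}. card {h\<in>Hs. h x = a \<and> h y = a})"
    unfolding eq by (rule card_UN_disjoint) (use fin in auto)
  then have "real (card {h\<in>Hs. h x = h y}) = (\<Sum>a\<in>{1..w}. real (card {h\<in>Hs. h x = a \<and> h y = a}))"
    by simp
  also have "\<dots> = (\<Sum>a\<in>{1..w}. real (card Hs) / (real w)^2)"
  proof (rule sum.cong)
    fix a assume a: "a \<in> {1..w}"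
    have "real (card {h\<in>Hs. h x = a \<and> h y = a}) / real (card Hs) = 1 / (real w)^2" using pi a by blast
    then show "real (card {h\<in>Hs. h x = a \<and> h y = a}) = real (card Hs) / (real w)^2"
      using cH by (simp add: field_simps)
  qed simp
  also have "\<dots> = real (card Hs) / real w" using w1 by (simp add: power2_eq_square)
  finally show ?thesis using w1 by simp
qed

lemma comp_coll:
  assumes "finite I" "i0 \<in> I"
  shows "card {t \<in> PiE I H. P (t i0)} * card (H i0) = card {h \<in> H i0. P h} * card (PiE I H)"
proof -
  have eq: "{t \<in> PiE I H. P (t i0)} = PiE I (\<lambda>i. if i = i0 then {h \<in> H i. P h} else H i)"
    using assms(2) by (auto simp: PiE_def Pi_def)
  have "card {t \<in> PiE I H. P (t i0)} = card {h \<in> H i0. P h} * (\<Prod>i\<in>I-{i0}. card (H i))"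
    unfolding eq using assms by (simp add: card_PiE prod.remove)
  moreover have "card (PiE I H) = card (H i0) * (\<Prod>i\<in>I-{i0}. card (H i))"
    using assms by (simp add: card_PiE prod.remove)
  ultimately show ?thesis by simp
qed


lemma cancel_aux:
  fixes a b h t w :: real
  assumes "a * h = b * t" "b * w = h" "h > 0"
  shows "a * w = t"
proof -
  have "(a * w) * h = (a * h) * w" by (simp add: algebra_simps)
  also have "\<dots> = (b * w) * t" using assms(1) by (simp add: algebra_simps)
  also have "\<dots> = t * h" using assms(2) by (simp add: algebra_simps)
  finally show ?thesis using assms(3) by simp
qed

lemma row_sum:
  assumes fI: "finite I" and pif: "\<forall>i\<in>I. pairwise_indep_family (H i) (D i) w"
    and rD: "\<forall>r\<in>R. \<forall>i\<in>I. snd r i \<in> D i" and qD: "\<forall>i\<in>I. q i \<in> D i" and fR: "finite R"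
  shows "real (\<Sum>t\<in>PiE I H. card {r\<in>R. (\<exists>i\<in>I. snd r i \<noteq> q i) \<and> (\<forall>i\<in>I. t i (snd r i) = t i (q i))}) * real w
         \<le> real (card R) * real (card (PiE I H))"
proof -
  let ?T = "PiE I H"
  let ?C = "\<lambda>t r. (\<exists>i\<in>I. snd r i \<noteq> q i) \<and> (\<forall>i\<in>I. t i (snd r i) = t i (q i))"
  have finH: "\<forall>i\<in>I. finite (H i)" and neH: "\<forall>i\<in>I. H i \<noteq> {}"
    using pif by (auto simp: pairwise_indep_family_def)
  have fT: "finite ?T" using fI finH by (simp add: finite_PiE)
  have "(\<Sum>t\<in>?T. card {r\<in>R. ?C t r}) = (\<Sum>t\<in>?T. \<Sum>r\<in>R. if ?C t r then 1 else 0)"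
    using fR by (simp add: sum.If_cases Int_def)
  also have "\<dots> = (\<Sum>r\<in>R. \<Sum>t\<in>?T. if ?C t r then 1 else 0)" by (rule sum.swap)
  also have "\<dots> = (\<Sum>r\<in>R. card {t\<in>?T. ?C t r})"
    using fT by (simp add: sum.If_cases Int_def)
  finally have eq: "(\<Sum>t\<in>?T. card {r\<in>R. ?C t r}) = (\<Sum>r\<in>R. card {t\<in>?T. ?C t r})" .
  have each: "real (card {t\<in>?T. ?C t r}) * real w \<le> real (card ?T)" if r: "r \<in> R" for r
  proof (cases "\<exists>i\<in>I. snd r i \<noteq> q i")
    case False
    then have "{t\<in>?T. ?C t r} = {}" by auto
    then show ?thesis by (simp only: card.empty of_nat_0 mult_zero_left of_nat_0_le_iff)
  next
    case True
    then obtain i0 where i0: "i0 \<in> I" "snd r i0 \<noteq> q i0" by blast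
    have sub: "{t\<in>?T. ?C t r} \<subseteq> {t\<in>?T. t i0 (snd r i0) = t i0 (q i0)}" using i0 by auto
    have c1: "card {t\<in>?T. ?C t r} \<le> card {t\<in>?T. t i0 (snd r i0) = t i0 (q i0)}"
      using fT sub by (intro card_mono) auto
    have c2: "card {t\<in>?T. (\<lambda>h. h (snd r i0) = h (q i0)) (t i0)} * card (H i0)
        = card {h \<in> H i0. (\<lambda>h. h (snd r i0) = h (q i0)) h} * card ?T"
      by (rule comp_coll[OF fI i0(1)])
    have c3: "real (card {h\<in>H i0. h (snd r i0) = h (q i0)}) * real w = real (card (H i0))"
      using pair_coll[of "H i0" "D i0" w "snd r i0" "q i0"] pif rD qD i0 r by auto
    have pos: "real (card (H i0)) > 0" using finH neH i0 by (simp add: card_gt_0_iff)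
    have "real (card {t\<in>?T. t i0 (snd r i0) = t i0 (q i0)}) * real (card (H i0))
        = real (card {h\<in>H i0. h (snd r i0) = h (q i0)}) * real (card ?T)"
      using arg_cong[OF c2, of real] by (simp only: of_nat_mult)
    then have "real (card {t\<in>?T. t i0 (snd r i0) = t i0 (q i0)}) * real w = real (card ?T)"
      by (rule cancel_aux[OF _ c3 pos])
    moreover have "real (card {t\<in>?T. ?C t r}) * real w \<le> real (card {t\<in>?T. t i0 (snd r i0) = t i0 (q i0)}) * real w"
      using c1 by (simp add: mult_right_mono)
    ultimately show ?thesis by simp
  qed
  have "real (\<Sum>t\<in>?T. card {r\<in>R. ?C t r}) * real w = (\<Sum>r\<in>R. real (card {t\<in>?T. ?C t r}) * real w)"
    unfolding eq by (simp add: sum_distrib_right)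
  also have "\<dots> \<le> (\<Sum>r\<in>R. real (card ?T))" by (rule sum_mono) (use each in auto)
  also have "\<dots> = real (card R) * real (card ?T)" by simp
  finally show ?thesis .
qed

lemma markov_count:
  assumes "finite T" "c > 0"
  shows "real (card {t\<in>T. real (X t) > c}) * c \<le> real (\<Sum>t\<in>T. X t)"
proof -
  have "real (card {t\<in>T. real (X t) > c}) * c = (\<Sum>t\<in>{t\<in>T. real (X t) > c}. c)" by simp
  also have "\<dots> \<le> (\<Sum>t\<in>{t\<in>T. real (X t) > c}. real (X t))" by (rule sum_mono) auto
  also have "\<dots> \<le> (\<Sum>t\<in>T. real (X t))" using assms by (intro sum_mono2) auto
  finally show ?thesis by simp
qed


lemma est_key:
  assumes dist: "distinct (map fst rs)" and p1: "p \<ge> 1" and j: "j \<in> {1..d}"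
  shows "card (\<Inter>i\<in>{1..p}. build_sketch p d hs rs i j (hs (i, j) (q i)))
     = true_freq p rs q + card {r\<in>set rs. (\<exists>i\<in>{1..p}. snd r i \<noteq> q i) \<and> (\<forall>i\<in>{1..p}. hs (i,j) (snd r i) = hs (i,j) (q i))}"
proof -
  let ?M = "{r\<in>set rs. \<forall>i\<in>{1..p}. snd r i = q i}"
  let ?O = "{r\<in>set rs. (\<exists>i\<in>{1..p}. snd r i \<noteq> q i) \<and> (\<forall>i\<in>{1..p}. hs (i,j) (snd r i) = hs (i,j) (q i))}"
  have drs: "distinct rs" using dist by (simp add: distinct_map)
  have tf: "true_freq p rs q = card ?M"
    unfolding true_freq_def using distinct_length_filter[OF drs] by (simp add: Int_def conj_commute)
  have "{r \<in> set rs. \<forall>i\<in>{1..p}. hs (i,j) (snd r i) = hs (i,j) (q i)} = ?M \<union> ?O" by auto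
  moreover have "card (?M \<union> ?O) = card ?M + card ?O" by (rule card_Un_disjoint) auto
  ultimately show ?thesis using card_coll[OF dist p1 j, of hs q] tf by simp
qed

lemma depth_bound:
  assumes "0 < \<delta>" "\<delta> < 1"
  shows "exp (- real (sketch_depth \<delta>)) \<le> \<delta>"
proof -
  have "ln (1/\<delta>) \<le> real (sketch_depth \<delta>)" unfolding sketch_depth_def
    by (metis ceiling_correct of_int_le_iff order_trans le_nat_iff nat_le_iff of_nat_nat
        linorder_not_le ceiling_le_iff nat_0_le of_int_of_nat_eq less_le_not_le nle_le zero_le_ceiling)
  then have "- real (sketch_depth \<delta>) \<le> ln \<delta>" using assms by (simp add: ln_div)
  then have "exp (- real (sketch_depth \<delta>)) \<le> exp (ln \<delta>)" by simp
  then show ?thesis using assms by simp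
qed


theorem lemma3p1:
  fixes \<epsilon> \<delta> :: real and p :: nat
    and D :: "nat \<Rightarrow> 'a set" and H :: "nat \<Rightarrow> ('a \<Rightarrow> nat) set"
    and rs :: "('b, 'a) srecord list" and q :: "nat \<Rightarrow> 'a"
  assumes "\<epsilon> > 0" and "0 < \<delta>" and "\<delta> < 1" and "p \<ge> 1"
    and "\<forall>i\<in>{1..p}. pairwise_indep_family (H i) (D i) (sketch_width \<epsilon>)"
    and "distinct (map fst rs)"
    and "\<forall>r\<in>set rs. \<forall>i\<in>{1..p}. snd r i \<in> D i"
    and "\<forall>i\<in>{1..p}. q i \<in> D i"
  shows "measure_pmf.prob (hash_choice p (sketch_depth \<delta>) H)
           {hs. \<bar>real (estimate p (sketch_depth \<delta>) hs rs q) - real (true_freq p rs q)\<bar>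
                  \<le> \<epsilon> * real (length rs)} \<ge> 1 - \<delta>"
proof -
  note eps = assms(1) and pif = assms(5) and dist = assms(6) and rD = assms(7) and qD = assms(8)
  define d where "d = sketch_depth \<delta>"
  define w where "w = sketch_width \<epsilon>"
  define N where "N = length rs"
  define I where "I = {1..p}"
  define J where "J = {1..d}"
  define T where "T = PiE I H"
  define S where "S = PiE (I \<times> J) (\<lambda>(i,j). H i)"
  define over where "over t = card {r\<in>set rs. (\<exists>i\<in>I. snd r i \<noteq> q i) \<and> (\<forall>i\<in>I. t i (snd r i) = t i (q i))}" for t :: "nat \<Rightarrow> 'a \<Rightarrow> nat" 
  define tf where "tf = true_freq p rs q"
  define E where "E = {hs. \<bar>real (estimate p d hs rs q) - real tf\<bar> \<le> \<epsilon> * real N}"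
  define P where "P t = (real (over t) > \<epsilon> * real N)" for t
  define Bad where "Bad = {hs \<in> S. \<forall>j\<in>J. P (\<lambda>i. hs (i,j))}"
  have fI: "finite I" and fJ: "finite J" and cJ: "card J = d" by (simp_all add: I_def J_def)
  have finH: "\<forall>i\<in>I. finite (H i)" and neH: "\<forall>i\<in>I. H i \<noteq> {}"
    using pif by (auto simp: pairwise_indep_family_def I_def)
  have fS: "finite S" unfolding S_def using fI fJ finH by (intro finite_PiE) auto
  have neS: "S \<noteq> {}" unfolding S_def using neH by (auto simp: PiE_eq_empty_iff)
  have fT: "finite T" unfolding T_def using fI finH by (intro finite_PiE) auto
  have neT: "T \<noteq> {}" unfolding T_def using neH by (auto simp: PiE_eq_empty_iff)
  have hc: "hash_choice p d H = pmf_of_set S" by (simp add: hash_choice_def S_def I_def J_def)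
  have prob: "measure_pmf.prob (hash_choice p d H) E = real (card (S \<inter> E)) / real (card S)"
    unfolding hc using fS neS by (simp add: measure_pmf_of_set)
  have good: "hs \<in> E" if ex: "\<exists>j\<in>J. \<not> P (\<lambda>i. hs (i,j))" for hs
  proof -
    obtain j0 where j0: "j0 \<in> J" "real (over (\<lambda>i. hs (i,j0))) \<le> \<epsilon> * real N"
      using ex by (auto simp: P_def not_less)
    have d1: "J \<noteq> {}" using j0 by auto
    have est: "estimate p d hs rs q = Min ((\<lambda>j. tf + over (\<lambda>i. hs (i,j))) ` J)"
      unfolding estimate_def Let_def
    proof (rule arg_cong[where f=Min], rule image_cong)
      fix j assume "j \<in> J"
      then have "j \<in> {1..d}" by (simp add: J_def)
      from est_key[OF dist assms(4) this, of hs q]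
      show "card (\<Inter>i\<in>{1..p}. build_sketch p d hs rs i j (hs (i, j) (q i))) = tf + over (\<lambda>i. hs (i,j))"
        by (simp add: tf_def over_def I_def)
    qed (simp add: J_def)
    have le: "estimate p d hs rs q \<le> tf + over (\<lambda>i. hs (i,j0))"
      unfolding est using fJ j0 by (intro Min_le) auto
    have ge: "estimate p d hs rs q \<ge> tf"
      unfolding est using fJ d1 by (subst Min_ge_iff) auto
    show ?thesis unfolding E_def using le ge j0(2) by auto
  qed
  have sub: "S - Bad \<subseteq> S \<inter> E" using good unfolding Bad_def by auto
  have cardE: "real (card S) - real (card Bad) \<le> real (card (S \<inter> E))"
  proof -
    have "card (S - Bad) \<le> card (S \<inter> E)" using sub fS by (intro card_mono) auto
    moreover have "card (S - Bad) = card S - card Bad" using fS by (intro card_Diff_subset) (auto simp: Bad_def)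
    ultimately show ?thesis by linarith
  qed
  have cBad: "card Bad = card {t\<in>T. P t} ^ d"
    unfolding Bad_def S_def T_def using card_rows[OF fI fJ finH, of P] cJ by simp
  have cS: "card S = card T ^ d"
    using card_rows[OF fI fJ finH, of "\<lambda>_. True"] cJ unfolding S_def T_def by simp
  have row: "real (card {t\<in>T. P t}) \<le> real (card T) * exp (-1)"
  proof (cases "N = 0")
    case True
    have "over t \<le> N" for t
    proof -
      have "over t \<le> card (set rs)" unfolding over_def by (intro card_mono) auto
      also have "\<dots> \<le> N" unfolding N_def by (rule card_length)
      finally show ?thesis .
    qed
    then have "{t\<in>T. P t} = {}" using True by (auto simp: P_def)
    then have "real (card {t\<in>T. P t}) = 0" by (simp only: card.empty of_nat_0)
    moreover have "0 \<le> real (card T) * exp (-1)" by simp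
    ultimately show ?thesis by linarith
  next
    case False
    have c: "\<epsilon> * real N > 0" using False eps by simp
    have m: "real (card {t\<in>T. P t}) * (\<epsilon> * real N) \<le> real (\<Sum>t\<in>T. over t)"
      using markov_count[OF fT c, of over] unfolding P_def by simp
    have rs1: "real (\<Sum>t\<in>T. over t) * real w \<le> real (card (set rs)) * real (card T)"
      unfolding over_def T_def
      by (rule row_sum[of I H D w "set rs" q]) (use fI pif rD qD in \<open>auto simp: I_def w_def\<close>)
    have "real (card (set rs)) \<le> real N" unfolding N_def by (simp add: card_length)
    then have rs2: "real (\<Sum>t\<in>T. over t) * real w \<le> real N * real (card T)"
      using rs1 by (meson mult_right_mono of_nat_0_le_iff order_trans)
    have we: "real w * \<epsilon> \<ge> exp 1"
    proof -
      have "real w \<ge> exp 1 / \<epsilon>" unfolding w_def sketch_width_def by linarith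
      then show ?thesis using eps by (simp add: field_simps)
    qed
    define b where "b = real (card {t\<in>T. P t})"
    define tc where "tc = real (card T)"
    have "b * (\<epsilon> * real N) * real w \<le> real N * tc"
      using m rs2 unfolding b_def tc_def
      by (meson mult_right_mono of_nat_0_le_iff order_trans)
    then have "real N * (b * (real w * \<epsilon>)) \<le> real N * tc" by (simp add: algebra_simps)
    then have "b * (real w * \<epsilon>) \<le> tc" using False by simp
    moreover have "b * exp 1 \<le> b * (real w * \<epsilon>)" using we b_def by (simp add: mult_left_mono)
    ultimately have "b * exp 1 \<le> tc" by linarith
    then show ?thesis unfolding b_def tc_def by (simp add: exp_minus field_simps)
  qed
  have cTpos: "real (card T) > 0" using fT neT by (simp add: card_gt_0_iff)
  have ratio: "real (card Bad) / real (card S) \<le> \<delta>"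
  proof -
    have "real (card Bad) / real (card S) = (real (card {t\<in>T. P t}) / real (card T)) ^ d"
      by (simp add: cBad cS power_divide)
    also have "\<dots> \<le> (exp (-1)) ^ d"
      using row cTpos by (intro power_mono) (simp_all add: field_simps)
    also have "\<dots> = exp (- real d)" by (simp add: exp_of_nat_mult[symmetric])
    also have "\<dots> \<le> \<delta>" unfolding d_def using depth_bound assms(2,3) by simp
    finally show ?thesis .
  qed
  have "1 - \<delta> \<le> 1 - real (card Bad) / real (card S)" using ratio by simp
  also have "\<dots> = (real (card S) - real (card Bad)) / real (card S)"
    using fS neS by (simp add: field_simps card_gt_0_iff)
  also have "\<dots> \<le> real (card (S \<inter> E)) / real (card S)"
    using cardE by (simp add: divide_right_mono)
  finally show ?thesis using prob unfolding E_def d_def tf_def N_def by simp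
qed

end
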